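(* Let $E$ be a finite set and let $\mathcal{W}\subseteq\{+,-,0\}^E$ satisfy (A1), (A2) and (A3). Then $\mathcal{W}$ is an affine oriented matroid.
   Context: For $X\in\{+,-,0\}^E$: $X^+=\{e:X_e=+\}$, $X^-=\{e:X_e=-\}$, support $\underline{X}=X^+\cup X^-$; $(-X)_e=-X_e$; composition $(X\circ Y)_e=X_e$ if $X_e\neq0$, else $Y_e$; $S(X,Y)=(X^+\cap Y^-)\cup(X^-\cap Y^+)$; $\mathcal{A}\circ\mathcal{B}=\{A\circ B: A\in\mathcal{A},B\in\mathcal{B}\}$. An oriented matroid on $F$ is $\mathcal{O}\subseteq\{+,-,0\}^F$ with: (O1) zero vector in $\mathcal{O}$; (O2) $X\in\mathcal{O}\Rightarrow -X\in\mathcal{O}$; (O3) $X,Y\in\mathcal{O}\Rightarrow X\circ Y\in\mathcal{O}$; (O4) if $X,Y\in\mathcal{O}$, $\underline{X}=\underline{Y}$, $e\in S(X,Y)$, there is $Z\in\mathcal{O}$ with $Z_e=0$ and $Z_f=(X\circ Y)_f=(Y\circ X)_f$ for all $f\notin S(X,Y)$. $\mathcal{W}\subseteq\{+,-,0\}^E$ is an affine oriented matroid if there exist $g\notin E$ and an oriented matroid $\mathcal{O}$ on $E\cup\{g\}$ with $\mathcal{W}=\{X|_E : X\in\mathcal{O}, X_g=+\}$. For $X,Y$ with $\underline{X}=\underline{Y}$, $X\neq Y$, $e\in S(X,Y)$: $I_e(X,Y)=\{V : \underline{V}\subseteq\underline{X}\setminus\{e\}, V_f=X_f\ \forall f\notin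 S(X,Y)\}$, $I(X,Y)=\bigcup_{e\in S(X,Y)}I_e(X,Y)$. Sum: $(X+Y)_e=0$ if $e\in S(X,Y)$, else $(X\circ Y)_e$. $\mathrm{asym}(\mathcal{W})=\{V\in\mathcal{W}:-V\notin\mathcal{W}\}$, $\mathcal{P}(\mathcal{W})=\{X+(-Y): X,Y\in\mathrm{asym}(\mathcal{W}), \underline{X}=\underline{Y}, I(X,-Y)\cap\mathcal{W}=I(-X,Y)\cap\mathcal{W}=\emptyset\}$. Axioms: (A1) $X,Y\in\mathcal{W}\Rightarrow X\circ Y\in\mathcal{W}$ and $X\circ(-Y)\in\mathcal{W}$; (A2) if $X,Y\in\mathcal{W}$ with $\underline{X}=\underline{Y}$ then $I_e(X,Y)\cap\mathcal{W}\neq\emptyset$ for every $e\in S(X,Y)$; (A3) $\mathcal{P}(\mathcal{W})\circ\mathcal{W}\subseteq\mathcal{W}$. *)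

theory Defs
  imports Main
begin

text \<open>Signs and sign vectors. A sign vector on the ground set E is a function
  E \<Rightarrow> sign; the finite ground set E is modelled as (UNIV of) a finite type 'e.\<close>

datatype sign = Pos | Neg | Zero

definition sneg :: "('e \<Rightarrow> sign) \<Rightarrow> ('e \<Rightarrow> sign)" where
  "sneg X = (\<lambda>e. case X e of Pos \<Rightarrow> Neg | Neg \<Rightarrow> Pos | Zero \<Rightarrow> Zero)"

definition scomp :: "('e \<Rightarrow> sign) \<Rightarrow> ('e \<Rightarrow> sign) \<Rightarrow> ('e \<Rightarrow> sign)" where
  "scomp X Y = (\<lambda>e. if X e \<noteq> Zero then X e else Y e)"

definition supp :: "('e \<Rightarrow> sign) \<Rightarrow> 'e set" where
  "supp X = {e. X e \<noteq> Zero}"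

definition sep :: "('e \<Rightarrow> sign) \<Rightarrow> ('e \<Rightarrow> sign) \<Rightarrow> 'e set" where
  "sep X Y = {e. (X e = Pos \<and> Y e = Neg) \<or> (X e = Neg \<and> Y e = Pos)}"

definition oriented_matroid :: "('f \<Rightarrow> sign) set \<Rightarrow> bool" where
  "oriented_matroid OM \<longleftrightarrow>
     (\<lambda>_. Zero) \<in> OM \<and>
     (\<forall>X\<in>OM. sneg X \<in> OM) \<and>
     (\<forall>X\<in>OM. \<forall>Y\<in>OM. scomp X Y \<in> OM) \<and>
     (\<forall>X\<in>OM. \<forall>Y\<in>OM. supp X = supp Y \<longrightarrow>
        (\<forall>e\<in>sep X Y. \<exists>Z\<in>OM. Z e = Zero \<and>
           (\<forall>f. f \<notin> sep X Y \<longrightarrow> Z f = scomp X Y f \<and> Z f = scomp Y X f)))"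

text \<open>Affine oriented matroid: the extra element g \<notin> E is modelled as None in 'e option,
  E as the image of Some; restriction to E is composition with Some.\<close>
definition affine_oriented_matroid :: "('e \<Rightarrow> sign) set \<Rightarrow> bool" where
  "affine_oriented_matroid W \<longleftrightarrow>
     (\<exists>OM :: ('e option \<Rightarrow> sign) set. oriented_matroid OM \<and>
        W = {X \<circ> Some | X. X \<in> OM \<and> X None = Pos})"

definition I_e :: "'e \<Rightarrow> ('e \<Rightarrow> sign) \<Rightarrow> ('e \<Rightarrow> sign) \<Rightarrow> ('e \<Rightarrow> sign) set" where
  "I_e e X Y = {V. supp V \<subseteq> supp X - {e} \<and> (\<forall>f. f \<notin> sep X Y \<longrightarrow> V f = X f)}"

definition I_set :: "('e \<Rightarrow> sign) \<Rightarrow> ('e \<Rightarrow> sign) \<Rightarrow> ('e \<Rightarrow> sign) set" where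
  "I_set X Y = (\<Union>e\<in>sep X Y. I_e e X Y)"

definition ssum :: "('e \<Rightarrow> sign) \<Rightarrow> ('e \<Rightarrow> sign) \<Rightarrow> ('e \<Rightarrow> sign)" where
  "ssum X Y = (\<lambda>e. if e \<in> sep X Y then Zero else scomp X Y e)"

definition asym :: "('e \<Rightarrow> sign) set \<Rightarrow> ('e \<Rightarrow> sign) set" where
  "asym W = {V \<in> W. sneg V \<notin> W}"

definition P_set :: "('e \<Rightarrow> sign) set \<Rightarrow> ('e \<Rightarrow> sign) set" where
  "P_set W = {ssum X (sneg Y) | X Y. X \<in> asym W \<and> Y \<in> asym W \<and> supp X = supp Y \<and>
                 I_set X (sneg Y) \<inter> W = {} \<and> I_set (sneg X) Y \<inter> W = {}}"

definition axA1 :: "('e \<Rightarrow> sign) set \<Rightarrow> bool" where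
  "axA1 W \<longleftrightarrow> (\<forall>X\<in>W. \<forall>Y\<in>W. scomp X Y \<in> W \<and> scomp X (sneg Y) \<in> W)"

definition axA2 :: "('e \<Rightarrow> sign) set \<Rightarrow> bool" where
  "axA2 W \<longleftrightarrow> (\<forall>X\<in>W. \<forall>Y\<in>W. supp X = supp Y \<longrightarrow> (\<forall>e\<in>sep X Y. I_e e X Y \<inter> W \<noteq> {}))"

definition axA3 :: "('e \<Rightarrow> sign) set \<Rightarrow> bool" where
  "axA3 W \<longleftrightarrow> (\<forall>Z\<in>P_set W. \<forall>X\<in>W. scomp Z X \<in> W)"

end

theory Submission
  imports Defs
begin

lemma sneg_app: "sneg X f = (case X f of Pos \<Rightarrow> Neg | Neg \<Rightarrow> Pos | Zero \<Rightarrow> Zero)"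
  by (simp add: sneg_def)
lemma scomp_app: "scomp X Y f = (if X f \<noteq> Zero then X f else Y f)"
  by (simp add: scomp_def)
lemma supp_iff: "f \<in> supp X \<longleftrightarrow> X f \<noteq> Zero"
  by (simp add: supp_def)
lemma sep_iff: "f \<in> sep X Y \<longleftrightarrow> (X f = Pos \<and> Y f = Neg) \<or> (X f = Neg \<and> Y f = Pos)"
  by (simp add: sep_def)
lemma ssum_app: "ssum X Y f = (if f \<in> sep X Y then Zero else scomp X Y f)"
  by (simp add: ssum_def)

lemmas sv = sneg_app scomp_app supp_iff sep_iff ssum_app

lemma sneg_sneg[simp]: "sneg (sneg X) = X"
  by (rule ext) (auto simp: sv split: sign.splits)

lemma supp_eqD: "supp X = supp Y \<Longrightarrow> (X f = Zero) = (Y f = Zero)"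
  by (auto simp: supp_def)

lemma supp_sneg[simp]: "supp (sneg X) = supp X"
  by (auto simp: sv split: sign.splits)

lemma sep_comm: "sep X Y = sep Y X"
  by (auto simp: sep_def)

lemma sep_sneg_both[simp]: "sep (sneg X) (sneg Y) = sep X Y"
  by (auto simp: sv split: sign.splits)

lemma sep_negswap: "sep (sneg X) Y = sep X (sneg Y)"
  by (auto simp: sv split: sign.splits)

lemma sneg_scomp: "sneg (scomp X Y) = scomp (sneg X) (sneg Y)"
  by (rule ext) (auto simp: sv split: sign.splits)

lemma scomp_assoc: "scomp (scomp X Y) Z = scomp X (scomp Y Z)"
  by (rule ext) (auto simp: sv)

lemma scomp_comm_off_sep:
  "supp X = supp Y \<Longrightarrow> f \<notin> sep X Y \<Longrightarrow> scomp X Y f = scomp Y X f"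
  by (drule supp_eqD[where f=f]) (cases "X f"; cases "Y f"; auto simp: sv)

lemma off_sep_eq:
  "supp X = supp Y \<Longrightarrow> f \<notin> sep X Y \<Longrightarrow> X f = Y f"
  by (drule supp_eqD[where f=f]) (cases "X f"; cases "Y f"; auto simp: sv)

lemma I_e_comm: "supp X = supp Y \<Longrightarrow> I_e e X Y = I_e e Y X"
  unfolding I_e_def using off_sep_eq[of X Y] sep_comm[of X Y] by auto

lemma I_set_comm: "supp X = supp Y \<Longrightarrow> I_set X Y = I_set Y X"
  unfolding I_set_def using I_e_comm[of X Y] sep_comm[of X Y] by auto

definition Lset :: "('e \<Rightarrow> sign) set \<Rightarrow> ('e \<Rightarrow> sign) set" where
  "Lset W = {Z. \<forall>X\<in>W. scomp Z X \<in> W \<and> scomp (sneg Z) X \<in> W}"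

lemma scomp_zero[simp]: "scomp (\<lambda>_. Zero) X = X" by (rule ext) (simp add: sv)
lemma sneg_zero[simp]: "sneg (\<lambda>_. Zero) = (\<lambda>_. Zero)" by (rule ext) (simp add: sv)

lemma L_zero: "(\<lambda>_. Zero) \<in> Lset W"
  by (simp add: Lset_def)

lemma L_neg: "Z \<in> Lset W \<Longrightarrow> sneg Z \<in> Lset W"
  by (simp add: Lset_def)

lemma L_comp: "Z1 \<in> Lset W \<Longrightarrow> Z2 \<in> Lset W \<Longrightarrow> scomp Z1 Z2 \<in> Lset W"
  by (simp add: Lset_def scomp_assoc sneg_scomp)

lemma L_W: "Z \<in> Lset W \<Longrightarrow> X \<in> W \<Longrightarrow> scomp Z X \<in> W"
  by (simp add: Lset_def)

lemma W_L: assumes "axA1 W" "Z \<in> Lset W" "X \<in> W" shows "scomp X Z \<in> W"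
proof -
  have "scomp X (scomp Z X) \<in> W" using assms L_W[OF assms(2,3)] by (simp add: axA1_def)
  moreover have "scomp X (scomp Z X) = scomp X Z" by (rule ext) (auto simp: sv)
  ultimately show ?thesis by simp
qed

lemma L_sym: "axA1 W \<Longrightarrow> X \<in> W \<Longrightarrow> sneg X \<in> W \<Longrightarrow> X \<in> Lset W"
  by (simp add: axA1_def Lset_def)

lemma P_neg: assumes "Z \<in> P_set W" shows "sneg Z \<in> P_set W"
proof -
  from assms obtain X Y where Z: "Z = ssum X (sneg Y)" and X: "X \<in> asym W" and Y: "Y \<in> asym W"
    and s: "supp X = supp Y" and i1: "I_set X (sneg Y) \<inter> W = {}" and i2: "I_set (sneg X) Y \<inter> W = {}"
    unfolding P_set_def by blast
  have "sneg Z = ssum Y (sneg X)"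
    unfolding Z
    apply (rule ext)
    subgoal for f using supp_eqD[OF s, of f] by (cases "X f"; cases "Y f"; auto simp: sv)
    done
  moreover have "I_set Y (sneg X) = I_set (sneg X) Y" using I_set_comm[of Y "sneg X"] s by simp
  moreover have "I_set (sneg Y) X = I_set X (sneg Y)" using I_set_comm[of X "sneg Y"] s by simp
  ultimately show ?thesis unfolding P_set_def using X Y s i1 i2 by blast
qed

lemma P_L: "axA3 W \<Longrightarrow> Z \<in> P_set W \<Longrightarrow> Z \<in> Lset W"
  using P_neg[of Z W] by (simp add: axA3_def Lset_def)

lemma step_lemma:
  assumes A1: "axA1 W" and X: "X \<in> W" and Y: "Y \<in> W" and s: "supp X = supp Y"
    and V: "V \<in> W" and e: "e \<in> sep X (sneg Y)" and VI: "V \<in> I_e e X (sneg Y)"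
  shows "scomp V (sneg X) \<in> W \<and> supp (scomp V (sneg X)) = supp Y
       \<and> sep (scomp V (sneg X)) (sneg Y) \<subset> sep X (sneg Y)
       \<and> (\<forall>f. f \<notin> sep X (sneg Y) \<longrightarrow> scomp V (sneg X) f = X f)"
proof -
  have sV: "supp V \<subseteq> supp X - {e}" and Vf: "\<And>f. f \<notin> sep X (sneg Y) \<Longrightarrow> V f = X f"
    using VI by (auto simp: I_e_def)
  have Ve: "V e = Zero" using sV by (auto simp: supp_iff)
  have Vz: "X f = Zero \<Longrightarrow> V f = Zero" for f using sV by (auto simp: supp_iff)
  let ?X1 = "scomp V (sneg X)"
  have m: "?X1 \<in> W" using A1 V X by (simp add: axA1_def)
  have su: "supp ?X1 = supp Y" using s Vz by (auto simp: sv split: sign.splits)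
  have off: "\<forall>f. f \<notin> sep X (sneg Y) \<longrightarrow> ?X1 f = X f"
  proof (intro allI impI)
    fix f assume f: "f \<notin> sep X (sneg Y)"
    show "?X1 f = X f" using Vf[OF f] by (cases "X f") (auto simp: sv)
  qed
  have sub: "sep ?X1 (sneg Y) \<subseteq> sep X (sneg Y)"
  proof
    fix f assume f: "f \<in> sep ?X1 (sneg Y)"
    show "f \<in> sep X (sneg Y)"
    proof (rule ccontr)
      assume "f \<notin> sep X (sneg Y)"
      with off have "?X1 f = X f" by blast
      with f \<open>f \<notin> sep X (sneg Y)\<close> show False by (simp add: sep_iff)
    qed
  qed
  have "e \<notin> sep ?X1 (sneg Y)" using Ve e by (auto simp: sv split: sign.splits)
  with sub e have "sep ?X1 (sneg Y) \<subset> sep X (sneg Y)" by blast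
  with m su off show ?thesis by blast
qed

lemma sep_neg_sym: "sep Y (sneg X) = sep X (sneg Y)"
  by (auto simp: sv split: sign.splits)

lemma gclaim:
  fixes W :: "('e::finite \<Rightarrow> sign) set"
  assumes A1: "axA1 W" and A3: "axA3 W"
  shows "X \<in> W \<Longrightarrow> Y \<in> W \<Longrightarrow> supp X = supp Y \<Longrightarrow>
         \<exists>Z\<in>Lset W. \<forall>f. f \<notin> sep X (sneg Y) \<longrightarrow> Z f = X f"
proof (induction "card (sep X (sneg Y))" arbitrary: X Y rule: less_induct)
  case less
  note X = less.prems(1) and Y = less.prems(2) and s = less.prems(3)
  show ?case
  proof (cases "sneg X \<in> W")
    case True
    then show ?thesis using L_sym[OF A1 X] by blast
  next
    case nX: False
    show ?thesis
    proof (cases "sneg Y \<in> W")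
      case True
      have "sneg Y \<in> Lset W" using L_sym[OF A1 True] Y by simp
      moreover have "\<forall>f. f \<notin> sep X (sneg Y) \<longrightarrow> sneg Y f = X f"
      proof (intro allI impI)
        fix f assume "f \<notin> sep X (sneg Y)"
        then show "sneg Y f = X f" using supp_eqD[OF s, of f]
          by (cases "X f"; cases "Y f"; auto simp: sv)
      qed
      ultimately show ?thesis by blast
    next
      case nY: False
      show ?thesis
      proof (cases "I_set X (sneg Y) \<inter> W = {} \<and> I_set (sneg X) Y \<inter> W = {}")
        case True
        have "ssum X (sneg Y) \<in> P_set W"
          unfolding P_set_def asym_def using True X Y nX nY s by blast
        then have "ssum X (sneg Y) \<in> Lset W" by (rule P_L[OF A3])
        moreover have "\<forall>f. f \<notin> sep X (sneg Y) \<longrightarrow> ssum X (sneg Y) f = X f"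
        proof (intro allI impI)
          fix f assume "f \<notin> sep X (sneg Y)"
          then show "ssum X (sneg Y) f = X f" using supp_eqD[OF s, of f]
            by (cases "X f"; cases "Y f"; auto simp: sv)
        qed
        ultimately show ?thesis by blast
      next
        case False
        then consider "I_set X (sneg Y) \<inter> W \<noteq> {}" | "I_set (sneg X) Y \<inter> W \<noteq> {}" by blast
        then show ?thesis
        proof cases
          case 1
          then obtain V e where V: "V \<in> W" and e: "e \<in> sep X (sneg Y)" and VI: "V \<in> I_e e X (sneg Y)"
            unfolding I_set_def by auto
          note st = step_lemma[OF A1 X Y s V e VI]
          let ?X1 = "scomp V (sneg X)"
          have st1: "?X1 \<in> W" and st2: "supp ?X1 = supp Y" and st3: "sep ?X1 (sneg Y) \<subset> sep X (sneg Y)"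
            and st4: "\<forall>f. f \<notin> sep X (sneg Y) \<longrightarrow> ?X1 f = X f" using st by auto
          have "card (sep ?X1 (sneg Y)) < card (sep X (sneg Y))"
            using st3 by (simp add: psubset_card_mono)
          then have "\<exists>Z\<in>Lset W. \<forall>f. f \<notin> sep ?X1 (sneg Y) \<longrightarrow> Z f = ?X1 f"
            using less.hyps st1 Y st2 by blast
          then obtain Z where Z: "Z \<in> Lset W"
            and Zf: "\<forall>f. f \<notin> sep ?X1 (sneg Y) \<longrightarrow> Z f = ?X1 f" by blast
          have "\<forall>f. f \<notin> sep X (sneg Y) \<longrightarrow> Z f = X f"
          proof (intro allI impI)
            fix f assume "f \<notin> sep X (sneg Y)"
            then show "Z f = X f" using Zf st3 st4 by auto
          qed
          with Z show ?thesis by blast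
        next
          case 2
          then obtain V e where V: "V \<in> W" and e: "e \<in> sep (sneg X) Y" and VI: "V \<in> I_e e (sneg X) Y"
            unfolding I_set_def by auto
          have e': "e \<in> sep Y (sneg X)" using e by (simp add: sep_comm)
          have VI': "V \<in> I_e e Y (sneg X)" using VI I_e_comm[of "sneg X" Y e] s by simp
          note st = step_lemma[OF A1 Y X s[symmetric] V e' VI']
          let ?X1 = "scomp V (sneg Y)"
          have st1: "?X1 \<in> W" and st2: "supp ?X1 = supp X" and st3: "sep ?X1 (sneg X) \<subset> sep Y (sneg X)"
            and st4: "\<forall>f. f \<notin> sep Y (sneg X) \<longrightarrow> ?X1 f = Y f" using st by auto
          have "card (sep ?X1 (sneg X)) < card (sep X (sneg Y))"
            using st3 sep_neg_sym[of Y X] by (simp add: psubset_card_mono)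
          then have "\<exists>Z\<in>Lset W. \<forall>f. f \<notin> sep ?X1 (sneg X) \<longrightarrow> Z f = ?X1 f"
            using less.hyps st1 X st2 by blast
          then obtain Z where Z: "Z \<in> Lset W"
            and Zf: "\<forall>f. f \<notin> sep ?X1 (sneg X) \<longrightarrow> Z f = ?X1 f" by blast
          have "\<forall>f. f \<notin> sep X (sneg Y) \<longrightarrow> sneg Z f = X f"
          proof (intro allI impI)
            fix f assume f: "f \<notin> sep X (sneg Y)"
            then have f': "f \<notin> sep Y (sneg X)" using sep_neg_sym[of Y X] by simp
            then have "Z f = Y f" using Zf st3 st4 by auto
            then show "sneg Z f = X f" using f supp_eqD[OF s, of f]
              by (cases "X f"; cases "Y f"; auto simp: sv)
          qed
          with L_neg[OF Z] show ?thesis by blast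
        qed
      qed
    qed
  qed
qed

definition elimP :: "('f \<Rightarrow> sign) set \<Rightarrow> ('f \<Rightarrow> sign) \<Rightarrow> ('f \<Rightarrow> sign) \<Rightarrow> 'f \<Rightarrow> bool" where
  "elimP Om X Y e \<longleftrightarrow> (\<exists>Z\<in>Om. Z e = Zero \<and> (\<forall>f. f \<notin> sep X Y \<longrightarrow> Z f = scomp X Y f))"

lemma elim0:
  fixes Om :: "('f::finite \<Rightarrow> sign) set"
  assumes comp: "\<And>X Y. X \<in> Om \<Longrightarrow> Y \<in> Om \<Longrightarrow> scomp X Y \<in> Om"
    and neg: "\<And>X. X \<in> Om \<Longrightarrow> sneg X \<in> Om"
    and Q0: "Q0 \<in> Om" "Q0 g \<noteq> Zero"
    and enz: "\<And>X Y e. X \<in> Om \<Longrightarrow> Y \<in> Om \<Longrightarrow> supp X = supp Y \<Longrightarrow> X g \<noteq> Zero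
               \<Longrightarrow> e \<in> sep X Y \<Longrightarrow> elimP Om X Y e"
    and Y1: "Y1 \<in> Om" and Y2: "Y2 \<in> Om" and Y1g: "Y1 g = Zero" and s: "supp Y1 = supp Y2"
    and e: "e \<in> sep Y1 Y2"
  shows "elimP Om Y1 Y2 e"
proof -
  define T where "T = supp Y1"
  define D where "D = (\<lambda>Q. supp Q - T - {g})"
  obtain Q where QO: "Q \<in> Om" and Qg: "Q g \<noteq> Zero"
    and mn: "\<And>Q'. Q' \<in> Om \<Longrightarrow> Q' g \<noteq> Zero \<Longrightarrow> card (D Q) \<le> card (D Q')"
    using ex_has_least_nat[of "\<lambda>Q. Q \<in> Om \<and> Q g \<noteq> Zero" Q0 "\<lambda>Q. card (D Q)"] Q0 by blast
  have sz: "\<And>f. (Y1 f = Zero) = (Y2 f = Zero)" using supp_eqD[OF s] by blast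
  have Tz: "\<And>f. f \<notin> T \<Longrightarrow> Y1 f = Zero \<and> Y2 f = Zero" using sz by (auto simp: T_def supp_iff)
  have Tn: "\<And>f. f \<in> T \<Longrightarrow> Y1 f \<noteq> Zero" by (auto simp: T_def supp_iff)
  have ST: "sep Y1 Y2 \<subseteq> T" by (auto simp: T_def sv)
  have gT: "g \<notin> T" using Y1g by (auto simp: T_def supp_iff)
  have gen: "\<exists>Z\<in>Om. Z e = Zero \<and> (\<forall>f. f \<notin> sep Y1 Y2 \<longrightarrow> Z f = scomp Y1 P f)"
    if PO: "P \<in> Om" and Pg: "P g \<noteq> Zero" for P
  proof -
    have a1: "scomp Y1 P \<in> Om" "scomp Y2 P \<in> Om" using comp Y1 Y2 PO by auto
    have ss: "supp (scomp Y1 P) = supp (scomp Y2 P)"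
      apply (rule set_eqI)
      subgoal for x using sz[of x] by (cases "Y1 x"; cases "Y2 x"; auto simp: sv)
      done
    have sp: "sep (scomp Y1 P) (scomp Y2 P) = sep Y1 Y2"
      apply (rule set_eqI)
      subgoal for x using sz[of x] by (cases "Y1 x"; cases "Y2 x"; auto simp: sv)
      done
    have g1: "scomp Y1 P g \<noteq> Zero" using Y1g Pg by (simp add: sv)
    have "elimP Om (scomp Y1 P) (scomp Y2 P) e" using enz[OF a1 ss g1] e sp by simp
    then obtain Z where Z: "Z \<in> Om" "Z e = Zero"
      and Zf: "\<forall>f. f \<notin> sep Y1 Y2 \<longrightarrow> Z f = scomp (scomp Y1 P) (scomp Y2 P) f"
      unfolding elimP_def sp by blast
    have "\<forall>f. f \<notin> sep Y1 Y2 \<longrightarrow> Z f = scomp Y1 P f"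
    proof (intro allI impI)
      fix f assume "f \<notin> sep Y1 Y2"
      then show "Z f = scomp Y1 P f" using Zf sz[of f] by (auto simp: sv)
    qed
    with Z show ?thesis by blast
  qed
  obtain Zp where Zp: "Zp \<in> Om" "Zp e = Zero" and Zpf: "\<forall>f. f \<notin> sep Y1 Y2 \<longrightarrow> Zp f = scomp Y1 Q f"
    using gen[OF QO Qg] by blast
  have nQO: "sneg Q \<in> Om" using neg QO by blast
  have nQg: "sneg Q g \<noteq> Zero" using Qg by (simp add: sv split: sign.splits)
  obtain Zm where Zm: "Zm \<in> Om" "Zm e = Zero" and Zmf: "\<forall>f. f \<notin> sep Y1 Y2 \<longrightarrow> Zm f = scomp Y1 (sneg Q) f"
    using gen[OF nQO nQg] by blast
  let ?Pp = "scomp Zp Zm" and ?Pm = "scomp Zm Zp"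
  have PO: "?Pp \<in> Om" "?Pm \<in> Om" using comp Zp Zm by auto
  have Ps: "supp ?Pp = supp ?Pm" by (auto simp: sv)
  have gS: "g \<notin> sep Y1 Y2" using ST gT by blast
  have Zpg: "Zp g = Q g" using Zpf gS Y1g by (simp add: sv)
  have Zmg: "Zm g = sneg Q g" using Zmf gS Y1g by (simp add: sv)
  have Ppg: "?Pp g \<noteq> Zero" using Zpg Qg by (simp add: sv)
  have gsep: "g \<in> sep ?Pp ?Pm" using Zpg Zmg Qg by (cases "Q g") (auto simp: sv)
  from enz[OF PO Ps Ppg gsep] obtain K where K: "K \<in> Om" "K g = Zero"
    and Kf: "\<forall>f. f \<notin> sep ?Pp ?Pm \<longrightarrow> K f = scomp ?Pp ?Pm f"
    unfolding elimP_def by auto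
  have Ke: "K e = Zero"
  proof -
    have "e \<notin> sep ?Pp ?Pm" using Zp Zm by (simp add: sv)
    then show ?thesis using Kf Zp Zm by (simp add: sv)
  qed
  have KT: "K f = Y1 f" if "f \<in> T" "f \<notin> sep Y1 Y2" for f
  proof -
    have "Zp f = Y1 f" "Zm f = Y1 f" using Zpf Zmf that Tn[OF that(1)] by (auto simp: sv)
    then have "f \<notin> sep ?Pp ?Pm" "scomp ?Pp ?Pm f = Y1 f" using Tn[OF that(1)] by (auto simp: sv)
    then show ?thesis using Kf by simp
  qed
  have Kout: "K f = Zero" if "f \<notin> T" "Q f = Zero" for f
  proof -
    have fS: "f \<notin> sep Y1 Y2" using that ST by blast
    have "Zp f = Zero" "Zm f = Zero" using Zpf Zmf fS Tz[OF that(1)] that(2) by (auto simp: sv)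
    then have "f \<notin> sep ?Pp ?Pm" "scomp ?Pp ?Pm f = Zero" by (auto simp: sv)
    then show ?thesis using Kf by simp
  qed
  have KD: "K f = Zero" if "f \<notin> T" "f \<noteq> g" for f
  proof (rule ccontr)
    assume Kd: "K f \<noteq> Zero"
    then have Qf: "Q f \<noteq> Zero" using Kout that by blast
    let ?R1 = "scomp K Q" and ?R2 = "scomp (sneg K) Q"
    have RO: "?R1 \<in> Om" "?R2 \<in> Om" using comp neg K QO by auto
    have Rs: "supp ?R1 = supp ?R2" by (auto simp: sv split: sign.splits)
    have R1g: "?R1 g \<noteq> Zero" using K Qg by (simp add: sv)
    have dsep: "f \<in> sep ?R1 ?R2" using Kd by (cases "K f") (auto simp: sv)
    from enz[OF RO Rs R1g dsep] obtain R where R: "R \<in> Om" "R f = Zero"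
      and Rf: "\<forall>h. h \<notin> sep ?R1 ?R2 \<longrightarrow> R h = scomp ?R1 ?R2 h"
      unfolding elimP_def by auto
    have Rg: "R g \<noteq> Zero"
    proof -
      have "g \<notin> sep ?R1 ?R2" using K by (simp add: sv)
      then show ?thesis using Rf K Qg by (simp add: sv)
    qed
    have sub: "D R \<subseteq> D Q - {f}"
    proof
      fix h assume h: "h \<in> D R"
      then have hR: "R h \<noteq> Zero" and hT: "h \<notin> T" and hg: "h \<noteq> g"
        by (auto simp: D_def supp_iff)
      have hf: "h \<noteq> f" using hR R by auto
      have "Q h \<noteq> Zero"
      proof
        assume Qh: "Q h = Zero"
        then have "K h = Zero" using Kout hT by blast
        then have "h \<notin> sep ?R1 ?R2" "scomp ?R1 ?R2 h = Zero" using Qh by (auto simp: sv)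
        then show False using Rf hR by simp
      qed
      then show "h \<in> D Q - {f}" using hT hg hf by (auto simp: D_def supp_iff)
    qed
    have "f \<in> D Q" using Qf that by (auto simp: D_def supp_iff)
    then have "D R \<subset> D Q" using sub by blast
    then have "card (D R) < card (D Q)" by (simp add: psubset_card_mono)
    with mn[OF R(1) Rg] show False by simp
  qed
  have "\<forall>f. f \<notin> sep Y1 Y2 \<longrightarrow> K f = scomp Y1 Y2 f"
  proof (intro allI impI)
    fix f assume fS: "f \<notin> sep Y1 Y2"
    show "K f = scomp Y1 Y2 f"
    proof (cases "f \<in> T")
      case True then show ?thesis using KT fS Tn by (simp add: sv)
    next
      case False
      then have "K f = Zero" using KD K(2) by (cases "f = g") auto
      then show ?thesis using Tz[OF False] by (simp add: sv)
    qed
  qed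
  with K Ke show ?thesis unfolding elimP_def by blast
qed

definition Oset :: "('e \<Rightarrow> sign) set \<Rightarrow> ('e option \<Rightarrow> sign) set" where
  "Oset W = {Y. (Y None = Pos \<and> Y \<circ> Some \<in> W) \<or> (Y None = Neg \<and> sneg Y \<circ> Some \<in> W)
                \<or> (Y None = Zero \<and> Y \<circ> Some \<in> Lset W)}"

definition lift :: "('e \<Rightarrow> sign) \<Rightarrow> sign \<Rightarrow> ('e option \<Rightarrow> sign)" where
  "lift X s = (\<lambda>z. case z of None \<Rightarrow> s | Some b \<Rightarrow> X b)"

lemma lift_None[simp]: "lift X s None = s" by (simp add: lift_def)
lemma lift_Some[simp]: "lift X s (Some b) = X b" by (simp add: lift_def)
lemma lift_comp[simp]: "lift X s \<circ> Some = X" by (rule ext) (simp add: lift_def)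

lemma sneg_o: "sneg Y \<circ> Some = sneg (Y \<circ> Some)" by (rule ext) (simp add: sv)
lemma scomp_o: "scomp X Y \<circ> Some = scomp (X \<circ> Some) (Y \<circ> Some)" by (rule ext) (simp add: sv)

lemma O_pos: "Y None = Pos \<Longrightarrow> Y \<in> Oset W \<longleftrightarrow> Y \<circ> Some \<in> W" by (simp add: Oset_def)
lemma O_negl: "Y None = Neg \<Longrightarrow> Y \<in> Oset W \<longleftrightarrow> sneg (Y \<circ> Some) \<in> W" by (simp add: Oset_def sneg_o)
lemma O_zero: "Y None = Zero \<Longrightarrow> Y \<in> Oset W \<longleftrightarrow> Y \<circ> Some \<in> Lset W" by (simp add: Oset_def)

lemma O_neg: assumes "Y \<in> Oset W" shows "sneg Y \<in> Oset W"
  using assms by (cases "Y None") (auto simp: O_pos O_negl O_zero sv sneg_o L_neg)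

lemma O_comp:
  assumes A1: "axA1 W" and X: "X \<in> Oset W" and Y: "Y \<in> Oset W"
  shows "scomp X Y \<in> Oset W"
proof (cases "X None")
  case Pos
  then have cn: "scomp X Y None = Pos" by (simp add: sv)
  have X': "X \<circ> Some \<in> W" using X Pos by (simp add: O_pos)
  have "scomp (X \<circ> Some) (Y \<circ> Some) \<in> W"
  proof (cases "Y None")
    case Pos then show ?thesis using Y X' A1 by (simp add: O_pos axA1_def)
  next
    case Neg
    then have "sneg (Y \<circ> Some) \<in> W" using Y by (simp add: O_negl)
    then show ?thesis using X' A1 unfolding axA1_def by (metis sneg_sneg)
  next
    case Zero then show ?thesis using Y X' W_L[OF A1] by (simp add: O_zero)
  qed
  then show ?thesis using cn by (simp add: O_pos scomp_o)
next
  case Neg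
  then have cn: "scomp X Y None = Neg" by (simp add: sv)
  have X': "sneg (X \<circ> Some) \<in> W" using X Neg by (simp add: O_negl)
  have "scomp (sneg (X \<circ> Some)) (sneg (Y \<circ> Some)) \<in> W"
  proof (cases "Y None")
    case Pos then show ?thesis using Y X' A1 by (simp add: O_pos axA1_def)
  next
    case Neg
    then have "sneg (Y \<circ> Some) \<in> W" using Y by (simp add: O_negl)
    then show ?thesis using X' A1 unfolding axA1_def by blast
  next
    case Zero
    then have "sneg (Y \<circ> Some) \<in> Lset W" using Y L_neg by (simp add: O_zero)
    then show ?thesis using X' W_L[OF A1] by blast
  qed
  then show ?thesis using cn by (simp add: O_negl scomp_o sneg_scomp)
next
  case Zero
  have X': "X \<circ> Some \<in> Lset W" using X Zero by (simp add: O_zero)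
  show ?thesis
  proof (cases "Y None")
    case Pos
    then have "scomp X Y None = Pos" using Zero by (simp add: sv)
    moreover have "scomp (X \<circ> Some) (Y \<circ> Some) \<in> W" using Y Pos X' L_W by (simp add: O_pos)
    ultimately show ?thesis by (simp add: O_pos scomp_o)
  next
    case Neg
    then have "scomp X Y None = Neg" using Zero by (simp add: sv)
    moreover have "scomp (sneg (X \<circ> Some)) (sneg (Y \<circ> Some)) \<in> W"
      using Y Neg L_neg[OF X'] L_W by (simp add: O_negl)
    ultimately show ?thesis by (simp add: O_negl scomp_o sneg_scomp)
  next
    case z: Zero
    then have "scomp X Y None = Zero" using Zero by (simp add: sv)
    moreover have "scomp (X \<circ> Some) (Y \<circ> Some) \<in> Lset W"
      using Y z X' L_comp by (simp add: O_zero)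
    ultimately show ?thesis by (simp add: O_zero scomp_o)
  qed
qed

lemma supp_o: "supp X = supp Y \<Longrightarrow> supp (X \<circ> Some) = supp (Y \<circ> Some)"
  by (auto simp: supp_def set_eq_iff)

lemma sep_SomeI: "Some b \<in> sep X Y \<longleftrightarrow> b \<in> sep (X \<circ> Some) (Y \<circ> Some)"
  by (simp add: sv)

lemma elim_swap: "supp X = supp Y \<Longrightarrow> elimP Om Y X e \<Longrightarrow> elimP Om X Y e"
  unfolding elimP_def using sep_comm[of X Y] scomp_comm_off_sep[of X Y] by metis

lemma elim_negt:
  assumes "\<And>Z. Z \<in> Om \<Longrightarrow> sneg Z \<in> Om" and "elimP Om (sneg X) (sneg Y) e"
  shows "elimP Om X Y e"
proof -
  from assms(2) obtain Z where Z: "Z \<in> Om" "Z e = Zero"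
    and Zf: "\<forall>f. f \<notin> sep X Y \<longrightarrow> Z f = scomp (sneg X) (sneg Y) f"
    unfolding elimP_def by auto
  have "\<forall>f. f \<notin> sep X Y \<longrightarrow> sneg Z f = scomp X Y f"
    using Zf by (auto simp: sv split: sign.splits)
  moreover have "sneg Z e = Zero" using Z by (simp add: sv)
  ultimately show ?thesis using assms(1)[OF Z(1)] unfolding elimP_def by blast
qed

lemma elim_pp:
  assumes A2: "axA2 W" and X: "X \<in> Oset W" and Y: "Y \<in> Oset W" and Xp: "X None = Pos"
    and Yp: "Y None = Pos" and s: "supp X = supp Y" and e: "e \<in> sep X Y"
  shows "elimP (Oset W) X Y e"
proof -
  obtain a where a: "e = Some a" using e Xp Yp by (cases e) (auto simp: sv)
  have X': "X \<circ> Some \<in> W" and Y': "Y \<circ> Some \<in> W" using X Y Xp Yp by (auto simp: O_pos)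
  have s': "supp (X \<circ> Some) = supp (Y \<circ> Some)" using supp_o[OF s] .
  have a': "a \<in> sep (X \<circ> Some) (Y \<circ> Some)" using e a sep_SomeI by metis
  obtain V where V: "V \<in> W" "V \<in> I_e a (X \<circ> Some) (Y \<circ> Some)"
    using A2 X' Y' s' a' unfolding axA2_def by blast
  have Va: "V a = Zero" and Vf: "\<And>b. b \<notin> sep (X \<circ> Some) (Y \<circ> Some) \<Longrightarrow> V b = X (Some b)"
    using V(2) by (auto simp: I_e_def supp_iff)
  let ?Z = "lift V Pos"
  have "?Z \<in> Oset W" using V by (simp add: O_pos)
  moreover have "?Z e = Zero" using a Va by simp
  moreover have "\<forall>f. f \<notin> sep X Y \<longrightarrow> ?Z f = scomp X Y f"
  proof (intro allI impI)
    fix f assume f: "f \<notin> sep X Y"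
    show "?Z f = scomp X Y f"
    proof (cases f)
      case None then show ?thesis using Xp by (simp add: sv)
    next
      case (Some b)
      then have "b \<notin> sep (X \<circ> Some) (Y \<circ> Some)" using f sep_SomeI by metis
      then show ?thesis using Some Vf supp_eqD[OF s, of f] by (auto simp: sv)
    qed
  qed
  ultimately show ?thesis unfolding elimP_def by blast
qed

lemma elim_pn:
  fixes W :: "('e::finite \<Rightarrow> sign) set"
  assumes A1: "axA1 W" and A2: "axA2 W" and A3: "axA3 W"
    and X: "X \<in> Oset W" and Y: "Y \<in> Oset W" and Xp: "X None = Pos"
    and Yn: "Y None = Neg" and s: "supp X = supp Y" and e: "e \<in> sep X Y"
  shows "elimP (Oset W) X Y e"
proof -
  define X' where "X' = X \<circ> Some"
  define Y' where "Y' = sneg (Y \<circ> Some)"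
  have X'W: "X' \<in> W" using X Xp by (simp add: O_pos X'_def)
  have Y'W: "Y' \<in> W" using Y Yn by (simp add: O_negl Y'_def)
  have s': "supp X' = supp Y'" using supp_o[OF s] by (simp add: X'_def Y'_def)
  have nY': "sneg Y' = Y \<circ> Some" by (simp add: Y'_def)
  obtain Z0 where Z0: "Z0 \<in> Lset W" and Z0f: "\<forall>f. f \<notin> sep X' (sneg Y') \<longrightarrow> Z0 f = X' f"
    using gclaim[OF A1 A3 X'W Y'W s'] by blast
  have Z0z: "X' b = Zero \<Longrightarrow> Z0 b = Zero" for b using Z0f by (auto simp: sv)
  have sepS: "Some b \<in> sep X Y \<longleftrightarrow> b \<in> sep X' (sneg Y')" for b
    using sep_SomeI[of b X Y] by (simp add: nY' X'_def)
  have cS: "scomp X Y (Some b) = X' b" if "b \<notin> sep X' (sneg Y')" for b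
    using supp_eqD[OF s, of "Some b"] by (auto simp: sv X'_def)
  have case0: "elimP (Oset W) X Y e" if ez: "e = None \<or> (\<exists>a. e = Some a \<and> Z0 a = Zero)"
  proof -
    let ?Z = "lift Z0 Zero"
    have "?Z \<in> Oset W" using Z0 by (simp add: O_zero)
    moreover have "?Z e = Zero" using ez by auto
    moreover have "\<forall>f. f \<notin> sep X Y \<longrightarrow> ?Z f = scomp X Y f"
    proof (intro allI impI)
      fix f assume f: "f \<notin> sep X Y"
      then obtain b where b: "f = Some b" using Xp Yn by (cases f) (auto simp: sv)
      then have "b \<notin> sep X' (sneg Y')" using f sepS by blast
      then show "?Z f = scomp X Y f" using b Z0f cS by simp
    qed
    ultimately show ?thesis unfolding elimP_def by blast
  qed
  show ?thesis
  proof (cases e)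
    case None then show ?thesis using case0 by blast
  next
    case (Some a)
    have aS: "a \<in> sep X' (sneg Y')" using e Some sepS by blast
    have Xa: "X' a \<noteq> Zero" using aS by (auto simp: sv)
    have XYa: "X' a = Y' a" using aS by (auto simp: sv split: sign.splits)
    consider "Z0 a = Zero" | "Z0 a = sneg X' a" | "Z0 a = X' a"
      using Xa by (cases "Z0 a"; cases "X' a") (auto simp: sv)
    then show ?thesis
    proof cases
      case 1 then show ?thesis using case0 Some by blast
    next
      case 2
      let ?C = "scomp Z0 X'"
      have CW: "?C \<in> W" using L_W[OF Z0 X'W] .
      have Cs: "supp X' = supp ?C" using Z0z by (auto simp: sv)
      have aC: "a \<in> sep X' ?C" using 2 Xa by (cases "X' a") (auto simp: sv)
      obtain U where U: "U \<in> W" "U \<in> I_e a X' ?C"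
        using A2 X'W CW Cs aC unfolding axA2_def by blast
      have Ua: "U a = Zero" and Uf: "\<And>b. b \<notin> sep X' ?C \<Longrightarrow> U b = X' b"
        using U(2) by (auto simp: I_e_def supp_iff)
      let ?Z = "lift U Pos"
      have "?Z \<in> Oset W" using U by (simp add: O_pos)
      moreover have "?Z e = Zero" using Some Ua by simp
      moreover have "\<forall>f. f \<notin> sep X Y \<longrightarrow> ?Z f = scomp X Y f"
      proof (intro allI impI)
        fix f assume f: "f \<notin> sep X Y"
        then obtain b where b: "f = Some b" using Xp Yn by (cases f) (auto simp: sv)
        then have bS: "b \<notin> sep X' (sneg Y')" using f sepS by blast
        then have "Z0 b = X' b" using Z0f by blast
        then have "b \<notin> sep X' ?C" by (auto simp: sv)
        then show "?Z f = scomp X Y f" using b Uf cS[OF bS] by simp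
      qed
      ultimately show ?thesis unfolding elimP_def by blast
    next
      case 3
      let ?C = "scomp (sneg Z0) Y'"
      have CW: "?C \<in> W" using L_W[OF L_neg[OF Z0] Y'W] .
      have Cs: "supp Y' = supp ?C" using Z0z s' by (auto simp: sv split: sign.splits)
      have aC: "a \<in> sep Y' ?C" using 3 Xa XYa by (cases "X' a") (auto simp: sv)
      obtain U where U: "U \<in> W" "U \<in> I_e a Y' ?C"
        using A2 Y'W CW Cs aC unfolding axA2_def by blast
      have Ua: "U a = Zero" and Uf: "\<And>b. b \<notin> sep Y' ?C \<Longrightarrow> U b = Y' b"
        using U(2) by (auto simp: I_e_def supp_iff)
      let ?Z = "lift (sneg U) Neg"
      have "?Z \<in> Oset W" using U by (simp add: O_negl)
      moreover have "?Z e = Zero" using Some Ua by (simp add: sv)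
      moreover have "\<forall>f. f \<notin> sep X Y \<longrightarrow> ?Z f = scomp X Y f"
      proof (intro allI impI)
        fix f assume f: "f \<notin> sep X Y"
        then obtain b where b: "f = Some b" using Xp Yn by (cases f) (auto simp: sv)
        then have bS: "b \<notin> sep X' (sneg Y')" using f sepS by blast
        then have Zb: "Z0 b = X' b" using Z0f by blast
        have XY: "X' b = sneg Y' b" using bS supp_eqD[OF s', of b]
          by (cases "X' b"; cases "Y' b") (auto simp: sv)
        have "?C b = Y' b" using Zb XY by (cases "Y' b") (auto simp: sv)
        then have "b \<notin> sep Y' ?C" by (auto simp: sv)
        then have "U b = Y' b" using Uf by blast
        then show "?Z f = scomp X Y f" using b cS[OF bS] XY by (simp add: sv)
      qed
      ultimately show ?thesis unfolding elimP_def by blast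
    qed
  qed
qed

lemma elim_nz:
  fixes W :: "('e::finite \<Rightarrow> sign) set"
  assumes A1: "axA1 W" and A2: "axA2 W" and A3: "axA3 W"
    and X: "X \<in> Oset W" and Y: "Y \<in> Oset W" and s: "supp X = supp Y"
    and Xn: "X None \<noteq> Zero" and e: "e \<in> sep X Y"
  shows "elimP (Oset W) X Y e"
proof -
  have Yn: "Y None \<noteq> Zero" using supp_eqD[OF s, of None] Xn by simp
  have negO: "\<And>Z. Z \<in> Oset W \<Longrightarrow> sneg Z \<in> Oset W" by (rule O_neg)
  show ?thesis
  proof (cases "X None")
    case XP: Pos
    show ?thesis
    proof (cases "Y None")
      case Pos then show ?thesis by (rule elim_pp[OF A2 X Y XP _ s e])
    next
      case Neg then show ?thesis by (rule elim_pn[OF A1 A2 A3 X Y XP _ s e])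
    next
      case Zero then show ?thesis using Yn by simp
    qed
  next
    case XN: Neg
    show ?thesis
    proof (cases "Y None")
      case Pos
      have e': "e \<in> sep Y X" using e by (simp add: sep_comm)
      have "elimP (Oset W) Y X e" by (rule elim_pn[OF A1 A2 A3 Y X Pos XN s[symmetric] e'])
      then show ?thesis by (rule elim_swap[OF s])
    next
      case Neg
      have p1: "sneg X None = Pos" using XN by (simp add: sv)
      have p2: "sneg Y None = Pos" using Neg by (simp add: sv)
      have s2: "supp (sneg X) = supp (sneg Y)" using s by simp
      have e2: "e \<in> sep (sneg X) (sneg Y)" using e by simp
      have "elimP (Oset W) (sneg X) (sneg Y) e"
        by (rule elim_pp[OF A2 O_neg[OF X] O_neg[OF Y] p1 p2 s2 e2])
      then show ?thesis using elim_negt[of "Oset W" X Y e] negO by blast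
    next
      case Zero then show ?thesis using Yn by simp
    qed
  next
    case Zero then show ?thesis using Xn by simp
  qed
qed

lemma O_OM:
  fixes W :: "('e::finite \<Rightarrow> sign) set"
  assumes A1: "axA1 W" and A2: "axA2 W" and A3: "axA3 W" and ne: "X0 \<in> W"
  shows "oriented_matroid (Oset W)"
proof -
  have zero: "(\<lambda>_. Zero) \<in> Oset W"
    using L_zero[of W] by (simp add: O_zero comp_def)
  have Q0: "lift X0 Pos \<in> Oset W" "lift X0 Pos None \<noteq> Zero" using ne by (auto simp: O_pos)
  have el: "elimP (Oset W) X Y e"
    if X: "X \<in> Oset W" and Y: "Y \<in> Oset W" and s: "supp X = supp Y" and e: "e \<in> sep X Y" for X Y e
  proof (cases "X None = Zero")
    case False
    show ?thesis by (rule elim_nz[OF A1 A2 A3 X Y s False e])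
  next
    case True
    have c: "\<And>X Y. X \<in> Oset W \<Longrightarrow> Y \<in> Oset W \<Longrightarrow> scomp X Y \<in> Oset W"
      using O_comp[OF A1] by blast
    have n: "\<And>X. X \<in> Oset W \<Longrightarrow> sneg X \<in> Oset W" using O_neg by blast
    have z: "\<And>X Y e. X \<in> Oset W \<Longrightarrow> Y \<in> Oset W \<Longrightarrow> supp X = supp Y \<Longrightarrow> X None \<noteq> Zero
               \<Longrightarrow> e \<in> sep X Y \<Longrightarrow> elimP (Oset W) X Y e"
      using elim_nz[OF A1 A2 A3] by blast
    show ?thesis by (rule elim0[where g=None, OF c n Q0 z X Y True s e])
  qed
  show ?thesis
    unfolding oriented_matroid_def
  proof (intro conjI ballI impI)
    show "(\<lambda>_. Zero) \<in> Oset W" by (rule zero)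
  next
    fix X assume "X \<in> Oset W" then show "sneg X \<in> Oset W" by (rule O_neg)
  next
    fix X Y assume "X \<in> Oset W" "Y \<in> Oset W" then show "scomp X Y \<in> Oset W" by (rule O_comp[OF A1])
  next
    fix X Y e assume X: "X \<in> Oset W" and Y: "Y \<in> Oset W" and s: "supp X = supp Y" and e: "e \<in> sep X Y"
    from el[OF X Y s e] obtain Z where Z: "Z \<in> Oset W" "Z e = Zero"
      and Zf: "\<forall>f. f \<notin> sep X Y \<longrightarrow> Z f = scomp X Y f" unfolding elimP_def by blast
    have "\<forall>f. f \<notin> sep X Y \<longrightarrow> Z f = scomp X Y f \<and> Z f = scomp Y X f"
      using Zf scomp_comm_off_sep[OF s] by metis
    with Z show "\<exists>Z\<in>Oset W. Z e = Zero \<and> (\<forall>f. f \<notin> sep X Y \<longrightarrow> Z f = scomp X Y f \<and> Z f = scomp Y X f)"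
      by blast
  qed
qed

theorem lemma3p1:
  fixes W :: "('e::finite \<Rightarrow> sign) set"
  assumes "axA1 W" and "axA2 W" and "axA3 W"
  shows "affine_oriented_matroid W"
proof (cases "W = {}")
  case True
  have om: "oriented_matroid {(\<lambda>_. Zero) :: 'e option \<Rightarrow> sign}"
    unfolding oriented_matroid_def by (auto simp: sep_def)
  have "W = {X \<circ> Some | X. X \<in> {(\<lambda>_. Zero) :: 'e option \<Rightarrow> sign} \<and> X None = Pos}"
    using True by auto
  then show ?thesis unfolding affine_oriented_matroid_def using om by blast
next
  case False
  then obtain X0 where X0: "X0 \<in> W" by blast
  have om: "oriented_matroid (Oset W)" by (rule O_OM[OF assms X0])
  have "W = {X \<circ> Some | X. X \<in> Oset W \<and> X None = Pos}"
  proof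
    show "W \<subseteq> {X \<circ> Some | X. X \<in> Oset W \<and> X None = Pos}"
    proof
      fix X assume "X \<in> W"
      then have "lift X Pos \<in> Oset W \<and> lift X Pos None = Pos" by (simp add: O_pos)
      then show "X \<in> {X \<circ> Some | X. X \<in> Oset W \<and> X None = Pos}"
        by (metis (mono_tags, lifting) lift_comp mem_Collect_eq)
    qed
  next
    show "{X \<circ> Some | X. X \<in> Oset W \<and> X None = Pos} \<subseteq> W" by (auto simp: O_pos)
  qed
  then show ?thesis unfolding affine_oriented_matroid_def using om by blast
qed

end
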